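(* Let $\phi_a,\phi_b,\phi_2\colon\mathbb{R}\to[0,\infty)$ be continuous probability density functions such that $\{\phi_a>0\}$, $\{\phi_b>0\}$ and $I_2=\{\phi_2>0\}$ are open intervals and $\inf\{\phi_a>0\}=\inf\{\phi_b>0\}=0$. Let $F_a,F_b,F_2$ be the corresponding cumulative distribution functions and suppose $F_a(t)\ge F_b(t)$ for all $t\in\mathbb{R}$. Put $K_a(x)=F_2^{-1}(F_a(x))$ for $x\in\{\phi_a>0\}$ and $K_b(x)=F_2^{-1}(F_b(x))$ for $x\in\{\phi_b>0\}$, where $F_2^{-1}$ is the inverse of $F_2$ restricted to $I_2$. Let $q\colon\mathbb{R}\to[0,\infty)$ be uniformly continuous and integrable, and define $$V_a=\int x\,\frac{\phi_a(x)}{\phi_2(K_a(x))}\,q(K_a(x))\,dx,\qquad V_b=\int x\,\frac{\phi_b(x)}{\phi_2(K_b(x))}\,q(K_b(x))\,dx,$$ the integrals taken over $\{\phi_a>0\}$ and $\{\phi_b>0\}$ respectively and assumed absolutely convergent. Then $V_a\le V_b$.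
   Context: Interpretation: $\phi_a,\phi_b$ are two candidate densities of a cash flow at horizon $T$ with the first stochastically dominated by the second, $\phi_2$ is the density of the terminal value of a traded benchmark security, $q$ its state price density, and $V_a,V_b$ are the values the valuation rule assigns to the two cash flows. *)

theory Defs
  imports "HOL-Analysis.Analysis"
begin

definition cont_pdf :: "(real \<Rightarrow> real) \<Rightarrow> bool" where
  "cont_pdf \<phi> \<longleftrightarrow> continuous_on UNIV \<phi> \<and> (\<forall>x. 0 \<le> \<phi> x) \<and> (\<phi> has_integral 1) UNIV"

definition cdf :: "(real \<Rightarrow> real) \<Rightarrow> real \<Rightarrow> real" where
  "cdf \<phi> t = integral {..t} \<phi>"

definition pos_set :: "(real \<Rightarrow> real) \<Rightarrow> real set" where
  "pos_set \<phi> = {x. \<phi> x > 0}"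

definition open_interval :: "real set \<Rightarrow> bool" where
  "open_interval S \<longleftrightarrow> is_interval S \<and> open S \<and> S \<noteq> {}"

definition Kmap :: "(real \<Rightarrow> real) \<Rightarrow> (real \<Rightarrow> real) \<Rightarrow> real \<Rightarrow> real" where
  "Kmap \<phi>2 \<phi> x = the_inv_into (pos_set \<phi>2) (cdf \<phi>2) (cdf \<phi> x)"

end

theory Submission
  imports Defs
begin


lemma closed_leb: "closed (S::real set) \<Longrightarrow> S \<in> sets lebesgue"
  by (metis borel_closed sets_completionI_sets sets_lborel)

lemma open_leb: "open (S::real set) \<Longrightarrow> S \<in> sets lebesgue"
  by (metis borel_open sets_completionI_sets sets_lborel)

lemma pdf_int_on:
  assumes "cont_pdf \<phi>" "S \<in> sets lebesgue"
  shows "\<phi> integrable_on S"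
proof -
  have "\<phi> absolutely_integrable_on UNIV"
    using assms(1) unfolding cont_pdf_def
    by (intro nonnegative_absolutely_integrable) (auto simp: integrable_on_def)
  then have "\<phi> absolutely_integrable_on S"
    using set_integrable_subset assms(2) by blast
  then show ?thesis using set_lebesgue_integral_eq_integral(1) by blast
qed

lemma cdf_split:
  assumes "cont_pdf \<phi>" "a \<le> t"
  shows "cdf \<phi> t = integral {..a} \<phi> + integral {a..t} \<phi>"
proof -
  have "{..t} = {..a} \<union> {a..t}" using assms(2) by auto
  moreover have "negligible ({..a} \<inter> {a..t})"
    using assms(2) by (simp add: negligible_sing)
  ultimately show ?thesis unfolding cdf_def
    using pdf_int_on[OF assms(1) closed_leb[of "{..a}"]] pdf_int_on[OF assms(1) closed_leb[of "{a..t}"]] by (simp)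
qed

lemma cdf_deriv:
  assumes "cont_pdf \<phi>"
  shows "(cdf \<phi> has_real_derivative \<phi> x) (at x)"
proof -
  have c: "continuous_on {x-1..x+1} \<phi>" using assms unfolding cont_pdf_def
    using continuous_on_subset by blast
  have "((\<lambda>t. integral {..x-1} \<phi> + integral {x-1..t} \<phi>) has_real_derivative \<phi> x) (at x within {x-1..x+1})"
    using integral_has_real_derivative[OF c, of x] by (auto intro!: derivative_eq_intros)
  then have "((\<lambda>t. integral {..x-1} \<phi> + integral {x-1..t} \<phi>) has_real_derivative \<phi> x) (at x)"
    using at_within_interior[of x "{x-1..x+1}"] by simp
  then show ?thesis
  proof (rule has_field_derivative_transform_within_open[where S="{x-1<..}"])
    fix y assume "y \<in> {x-1<..}"
    then show "integral {..x-1} \<phi> + integral {x-1..y} \<phi> = cdf \<phi> y"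
      using cdf_split[OF assms, of "x-1" y] by simp
  qed auto
qed

lemma cdf_le1: assumes "cont_pdf \<phi>" shows "cdf \<phi> t \<le> 1"
proof -
  have "integral {..t} \<phi> \<le> integral UNIV \<phi>"
    by (rule integral_subset_le) (use assms pdf_int_on[OF assms closed_leb] cont_pdf_def in auto)
  then show ?thesis using assms unfolding cont_pdf_def cdf_def using integral_unique by metis
qed

lemma cdf_lim: assumes "cont_pdf \<phi>" shows "(\<lambda>k. cdf \<phi> (real k)) \<longlonglongrightarrow> 1"
proof -
  let ?f = "\<lambda>k x. if x \<in> {..real k} then \<phi> x else 0"
  have "\<phi> integrable_on UNIV \<and> ((\<lambda>k. integral UNIV (?f k)) \<longlonglongrightarrow> integral UNIV \<phi>)"
  proof (rule monotone_convergence_increasing)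
    show "?f k integrable_on UNIV" for k
      using pdf_int_on[OF assms closed_leb[of "{..real k}"]] integrable_restrict_UNIV[of "{..real k}" \<phi>] by simp
    show "?f k x \<le> ?f (Suc k) x" for k x using assms by (auto simp: cont_pdf_def)
    show "(\<lambda>k. ?f k x) \<longlonglongrightarrow> \<phi> x" for x
    proof (rule tendsto_eventually)
      obtain N where "x \<le> real N" using real_arch_simple by blast
      then show "\<forall>\<^sub>F k in sequentially. ?f k x = \<phi> x"
        by (intro eventually_sequentiallyI[of N]) auto
    qed
    have eqk: "integral UNIV (?f k) = cdf \<phi> (real k)" for k
      unfolding cdf_def by (rule integral_restrict_UNIV)
    have "0 \<le> cdf \<phi> (real k)" for k
      unfolding cdf_def
      by (rule integral_nonneg[OF pdf_int_on[OF assms closed_leb[of "{..real k}"]]])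
         (use assms in \<open>auto simp: cont_pdf_def\<close>)
    then have "integral UNIV (?f k) \<in> {0..1}" for k
      using cdf_le1[OF assms, of "real k"] eqk[of k] by simp
    then show "bounded (range (\<lambda>k. integral UNIV (?f k)))"
      by (intro boundedI[of _ 1]) auto
  qed
  moreover have "integral UNIV (?f k) = cdf \<phi> (real k)" for k
      unfolding cdf_def by (rule integral_restrict_UNIV)
  moreover have "integral UNIV \<phi> = 1" using assms unfolding cont_pdf_def using integral_unique by blast
  ultimately show ?thesis by simp
qed



definition wfun :: "(real \<Rightarrow> real) \<Rightarrow> (real \<Rightarrow> real) \<Rightarrow> real \<Rightarrow> real" where
  "wfun \<phi>2 q u = q (the_inv_into (pos_set \<phi>2) (cdf \<phi>2) u) / \<phi>2 (the_inv_into (pos_set \<phi>2) (cdf \<phi>2) u)"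

context
  fixes \<phi> :: "real \<Rightarrow> real"
  assumes pdf: "cont_pdf \<phi>" and oi: "open_interval (pos_set \<phi>)"
    and bb: "bdd_below (pos_set \<phi>)" and inf0: "Inf (pos_set \<phi>) = 0"
begin

lemma pos_gt0: assumes "x \<in> pos_set \<phi>" shows "x > 0"
proof -
  obtain e where "e > 0" "ball x e \<subseteq> pos_set \<phi>"
    using oi assms unfolding open_interval_def open_contains_ball by blast
  then have "x - e/2 \<in> pos_set \<phi>" by (auto simp: dist_real_def)
  then have "Inf (pos_set \<phi>) \<le> x - e/2" using bb cInf_lower by blast
  then show ?thesis using inf0 \<open>e>0\<close> by simp
qed

lemma between: assumes "x \<in> pos_set \<phi>" "0 < y" "y \<le> x" shows "y \<in> pos_set \<phi>"
proof -
  have ne: "pos_set \<phi> \<noteq> {}" using assms by auto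
  obtain z where "z \<in> pos_set \<phi>" "z < y"
    using cInf_less_iff[OF ne bb] inf0 assms(2) by auto
  moreover have "is_interval (pos_set \<phi>)" using oi unfolding open_interval_def by blast
  ultimately show ?thesis unfolding is_interval_1 using assms(1,3) by (meson less_imp_le)
qed

lemma outside0: assumes "x \<notin> pos_set \<phi>" shows "\<phi> x = 0"
proof -
  have "0 \<le> \<phi> x" using pdf unfolding cont_pdf_def by blast
  then show ?thesis using assms unfolding pos_set_def by simp
qed

lemma cdf_0: "cdf \<phi> 0 = 0"
proof -
  have "integral {..0} \<phi> = integral {..0::real} (\<lambda>_::real. 0::real)"
  proof (rule Henstock_Kurzweil_Integration.integral_cong)
    fix x :: real assume "x \<in> {..0}"
    then have "x \<notin> pos_set \<phi>" using pos_gt0 by force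
    then show "\<phi> x = 0" by (rule outside0)
  qed
  then show ?thesis by (simp add: cdf_def)
qed

lemma cdf_strict: assumes "x \<in> pos_set \<phi>" "y \<in> pos_set \<phi>" "x < y"
  shows "cdf \<phi> x < cdf \<phi> y"
proof (rule DERIV_pos_imp_increasing[OF assms(3)])
  fix z assume "x \<le> z" "z \<le> y"
  moreover have "0 < z" using pos_gt0[OF assms(1)] \<open>x \<le> z\<close> by linarith
  ultimately have "z \<in> pos_set \<phi>" using between[OF assms(2)] by blast
  then show "\<exists>d. DERIV (cdf \<phi>) z :> d \<and> d > 0"
    using cdf_deriv[OF pdf] by (auto simp: pos_set_def)
qed

lemma cdf_pos: assumes "x \<in> pos_set \<phi>" shows "cdf \<phi> x > 0"
proof -
  have "cdf \<phi> 0 < cdf \<phi> x"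
  proof (rule DERIV_pos_imp_increasing_open[of 0 x "cdf \<phi>"])
    show "0 < x" using pos_gt0 assms by blast
    fix z assume "0 < z" "z < x"
    then have "z \<in> pos_set \<phi>" using between[OF assms, of z] by linarith
    then show "\<exists>d. DERIV (cdf \<phi>) z :> d \<and> d > 0"
      using cdf_deriv[OF pdf] by (auto simp: pos_set_def)
  next
    show "continuous_on {0..x} (cdf \<phi>)"
      using cdf_deriv[OF pdf] by (meson DERIV_continuous continuous_at_imp_continuous_on)
  qed
  then show ?thesis using cdf_0 by simp
qed

lemma cdf_lt1: assumes "x \<in> pos_set \<phi>" shows "cdf \<phi> x < 1"
proof -
  obtain e where "e > 0" "ball x e \<subseteq> pos_set \<phi>"
    using oi assms unfolding open_interval_def open_contains_ball by blast
  then have "x + e/2 \<in> pos_set \<phi>" by (auto simp: dist_real_def)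
  then have "cdf \<phi> x < cdf \<phi> (x + e/2)" using cdf_strict assms \<open>e>0\<close> by simp
  then show ?thesis using cdf_le1[OF pdf] by (meson less_le_trans)
qed

lemma cdf_image: "cdf \<phi> ` pos_set \<phi> = {0<..<1}"
proof
  show "cdf \<phi> ` pos_set \<phi> \<subseteq> {0<..<1}" using cdf_pos cdf_lt1 by auto
  show "{0<..<1} \<subseteq> cdf \<phi> ` pos_set \<phi>"
  proof
    fix u :: real assume u: "u \<in> {0<..<1}"
    obtain k where k: "cdf \<phi> (real k) > u"
    proof -
      have "\<forall>\<^sub>F k in sequentially. u < cdf \<phi> (real k)"
        using order_tendstoD(1)[OF cdf_lim[OF pdf], of u] u by simp
      then show ?thesis using that eventually_sequentially by (metis order_refl)
    qed
    have k0: "0 \<le> real k" by simp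
    have cont: "continuous_on {0..real k} (cdf \<phi>)"
      using cdf_deriv[OF pdf] by (meson DERIV_continuous continuous_at_imp_continuous_on)
    obtain x where x: "0 \<le> x" "x \<le> real k" "cdf \<phi> x = u"
      using IVT'[of "cdf \<phi>" 0 u "real k", OF _ _ k0 cont] k u cdf_0 by auto
    have "x \<in> pos_set \<phi>"
    proof (rule ccontr)
      assume nx: "x \<notin> pos_set \<phi>"
      have x0: "x > 0" using x cdf_0 u by (cases "x = 0") auto
      have "\<phi> z = 0" if "z \<notin> {..x}" for z
      proof -
        have "z \<notin> pos_set \<phi>"
        proof
          assume "z \<in> pos_set \<phi>"
          then have "x \<in> pos_set \<phi>" using between[of z x] that x0 by simp
          then show False using nx by blast
        qed
        then show ?thesis by (rule outside0)
      qed
      have "(\<phi> has_integral integral {..x} \<phi>) {..x}"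
        by (rule integrable_integral, rule pdf_int_on[OF pdf closed_leb]) auto
      then have "(\<phi> has_integral integral {..x} \<phi>) UNIV"
        by (rule has_integral_on_superset) (use \<open>\<And>z. z \<notin> {..x} \<Longrightarrow> \<phi> z = 0\<close> in auto)
      moreover have "(\<phi> has_integral 1) UNIV"
        using pdf unfolding cont_pdf_def by blast
      ultimately have "cdf \<phi> x = 1" unfolding cdf_def using has_integral_unique by blast
      then show False using x u by simp
    qed
    then show "u \<in> cdf \<phi> ` pos_set \<phi>" using x(3) by (metis image_eqI)
  qed
qed

lemma cdf_inj: "inj_on (cdf \<phi>) (pos_set \<phi>)"
proof (rule inj_onI)
  fix x y assume xy: "x \<in> pos_set \<phi>" "y \<in> pos_set \<phi>" "cdf \<phi> x = cdf \<phi> y"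
  show "x = y"
  proof (rule linorder_cases[of x y])
    assume "x < y" then show ?thesis using cdf_strict[OF xy(1,2)] xy(3) by simp
  next
    assume "y < x" then show ?thesis using cdf_strict[OF xy(2,1)] xy(3) by simp
  qed
qed

lemma change:
  assumes ai: "(\<lambda>x. x * \<phi> x / \<phi>2 (Kmap \<phi>2 \<phi> x) * q (Kmap \<phi>2 \<phi> x)) absolutely_integrable_on pos_set \<phi>"
  shows "(\<lambda>u. the_inv_into (pos_set \<phi>) (cdf \<phi>) u * wfun \<phi>2 q u) absolutely_integrable_on {0<..<1} \<and>
    integral {0<..<1} (\<lambda>u. the_inv_into (pos_set \<phi>) (cdf \<phi>) u * wfun \<phi>2 q u)
     = integral (pos_set \<phi>) (\<lambda>x. x * \<phi> x / \<phi>2 (Kmap \<phi>2 \<phi> x) * q (Kmap \<phi>2 \<phi> x))"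
proof -
  let ?S = "pos_set \<phi>"
  let ?f = "\<lambda>u. the_inv_into (pos_set \<phi>) (cdf \<phi>) u * wfun \<phi>2 q u"
  let ?h = "\<lambda>x. x * \<phi> x / \<phi>2 (Kmap \<phi>2 \<phi> x) * q (Kmap \<phi>2 \<phi> x)"
  have S: "?S \<in> sets lebesgue" using oi open_leb unfolding open_interval_def by blast
  have der: "(cdf \<phi> has_field_derivative \<phi> x) (at x within ?S)" if "x \<in> ?S" for x
    using cdf_deriv[OF pdf] has_field_derivative_at_within by blast
  have eq: "\<bar>\<phi> x\<bar> * ?f (cdf \<phi> x) = ?h x" if "x \<in> ?S" for x
  proof -
    have "the_inv_into ?S (cdf \<phi>) (cdf \<phi> x) = x" using the_inv_into_f_f[OF cdf_inj that] .
    moreover have "\<bar>\<phi> x\<bar> = \<phi> x" using pdf unfolding cont_pdf_def by simp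
    ultimately show ?thesis by (simp add: wfun_def Kmap_def)
  qed
  have "(\<lambda>x. \<bar>\<phi> x\<bar> * ?f (cdf \<phi> x)) absolutely_integrable_on ?S"
    using ai set_integrable_cong[OF refl refl, of ?S "\<lambda>x. \<bar>\<phi> x\<bar> * ?f (cdf \<phi> x)" ?h lebesgue] eq by simp
  moreover have "integral ?S (\<lambda>x. \<bar>\<phi> x\<bar> * ?f (cdf \<phi> x)) = integral ?S ?h"
    by (rule Henstock_Kurzweil_Integration.integral_cong) (rule eq)
  ultimately have "?f absolutely_integrable_on (cdf \<phi> ` ?S) \<and> integral (cdf \<phi> ` ?S) ?f = integral ?S ?h"
    using has_absolute_integral_change_of_variables_1'[OF S der cdf_inj, of ?f "integral ?S ?h"] by blast
  then show ?thesis using cdf_image by simp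
qed

end

lemma inv_le:
  assumes pa: "cont_pdf \<phi>a" "open_interval (pos_set \<phi>a)" "bdd_below (pos_set \<phi>a)" "Inf (pos_set \<phi>a) = 0"
    and pb: "cont_pdf \<phi>b" "open_interval (pos_set \<phi>b)" "bdd_below (pos_set \<phi>b)" "Inf (pos_set \<phi>b) = 0"
    and le: "\<forall>t. cdf \<phi>a t \<ge> cdf \<phi>b t"
    and u: "u \<in> {0<..<1}"
  shows "the_inv_into (pos_set \<phi>a) (cdf \<phi>a) u \<le> the_inv_into (pos_set \<phi>b) (cdf \<phi>b) u"
proof (rule ccontr)
  let ?x = "the_inv_into (pos_set \<phi>a) (cdf \<phi>a) u"
  let ?y = "the_inv_into (pos_set \<phi>b) (cdf \<phi>b) u"
  assume "\<not> ?x \<le> ?y"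
  then have yx: "?y < ?x" by simp
  have ua: "u \<in> cdf \<phi>a ` pos_set \<phi>a" using cdf_image[OF pa] u by simp
  have ub: "u \<in> cdf \<phi>b ` pos_set \<phi>b" using cdf_image[OF pb] u by simp
  have xa: "?x \<in> pos_set \<phi>a" using the_inv_into_into[OF cdf_inj[OF pa] ua order_refl] .
  have yb: "?y \<in> pos_set \<phi>b" using the_inv_into_into[OF cdf_inj[OF pb] ub order_refl] .
  have fx: "cdf \<phi>a ?x = u" using f_the_inv_into_f[OF cdf_inj[OF pa] ua] .
  have fy: "cdf \<phi>b ?y = u" using f_the_inv_into_f[OF cdf_inj[OF pb] ub] .
  have y0: "0 < ?y" using pos_gt0[OF pb yb] .
  have ya: "?y \<in> pos_set \<phi>a" using between[OF pa xa y0] yx by simp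
  have "cdf \<phi>a ?y < cdf \<phi>a ?x" using cdf_strict[OF pa ya xa yx] .
  moreover have "cdf \<phi>b ?y \<le> cdf \<phi>a ?y" using le by blast
  ultimately show False using fx fy by simp
qed

theorem mainTheorem3:
  fixes \<phi>a \<phi>b \<phi>2 q :: "real \<Rightarrow> real"
  assumes "cont_pdf \<phi>a" and "cont_pdf \<phi>b" and "cont_pdf \<phi>2"
    and "open_interval (pos_set \<phi>a)" and "open_interval (pos_set \<phi>b)"
    and "open_interval (pos_set \<phi>2)"
    and "bdd_below (pos_set \<phi>a)" and "Inf (pos_set \<phi>a) = 0"
    and "bdd_below (pos_set \<phi>b)" and "Inf (pos_set \<phi>b) = 0"
    and "\<forall>t. cdf \<phi>a t \<ge> cdf \<phi>b t"
    and "uniformly_continuous_on UNIV q" and "\<forall>x. 0 \<le> q x" and "q integrable_on UNIV"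
    and "(\<lambda>x. x * \<phi>a x / \<phi>2 (Kmap \<phi>2 \<phi>a x) * q (Kmap \<phi>2 \<phi>a x))
           absolutely_integrable_on pos_set \<phi>a"
    and "(\<lambda>x. x * \<phi>b x / \<phi>2 (Kmap \<phi>2 \<phi>b x) * q (Kmap \<phi>2 \<phi>b x))
           absolutely_integrable_on pos_set \<phi>b"
  shows "integral (pos_set \<phi>a) (\<lambda>x. x * \<phi>a x / \<phi>2 (Kmap \<phi>2 \<phi>a x) * q (Kmap \<phi>2 \<phi>a x))
       \<le> integral (pos_set \<phi>b) (\<lambda>x. x * \<phi>b x / \<phi>2 (Kmap \<phi>2 \<phi>b x) * q (Kmap \<phi>2 \<phi>b x))"
proof -
  note ca = change[OF assms(1,4,7,8) assms(15)]
  note cb = change[OF assms(2,5,9,10) assms(16)]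
  have w0: "0 \<le> wfun \<phi>2 q u" for u
    using assms(3,13) unfolding wfun_def cont_pdf_def by (simp add: divide_nonneg_nonneg)
  have "integral {0<..<1} (\<lambda>u. the_inv_into (pos_set \<phi>a) (cdf \<phi>a) u * wfun \<phi>2 q u)
     \<le> integral {0<..<1} (\<lambda>u. the_inv_into (pos_set \<phi>b) (cdf \<phi>b) u * wfun \<phi>2 q u)"
  proof (rule integral_le)
    show "(\<lambda>u. the_inv_into (pos_set \<phi>a) (cdf \<phi>a) u * wfun \<phi>2 q u) integrable_on {0<..<1}"
      using ca set_lebesgue_integral_eq_integral(1) by blast
    show "(\<lambda>u. the_inv_into (pos_set \<phi>b) (cdf \<phi>b) u * wfun \<phi>2 q u) integrable_on {0<..<1}"
      using cb set_lebesgue_integral_eq_integral(1) by blast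
    fix u assume "u \<in> {0<..<(1::real)}"
    then show "the_inv_into (pos_set \<phi>a) (cdf \<phi>a) u * wfun \<phi>2 q u
        \<le> the_inv_into (pos_set \<phi>b) (cdf \<phi>b) u * wfun \<phi>2 q u"
      using inv_le[OF assms(1,4,7,8) assms(2,5,9,10) assms(11)] w0
      by (simp add: mult_right_mono)
  qed
  then show ?thesis using ca cb by simp
qed

end
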